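(* Consider the problem $\min_{x\in\mathbb{R}^n} F(x):=f(x)+g(x)$ subject to $Ax=b$, under the setting described in the context, with optimal solution $x^*$ and with $\lambda^*$ an optimal solution of $\max_\lambda d(\lambda)$ such that $d(\lambda^* )=F(x^* )$. Let $\{x^k\}$ and $\{\lambda^k\}$ be generated by the IAL framework described in the context with $\eta_k=\frac{\sigma}{k^2}$ for some constant $\sigma>0$. Then, with $\delta_k:=d(\lambda^* )-d(\lambda^k)$, $$\delta_k=\mathcal{O}\!\left(\frac1k\right),\qquad \|Ax^{k+1}-b\|^2=\mathcal{O}\!\left(\frac1k\right),\qquad |F(x^{k+1})-F(x^* )|=\mathcal{O}\!\left(\frac1{\sqrt k}\right).$$
   Context: Let $A\in\mathbb{R}^{m\times n}$ and $b\in\mathbb{R}^m$. Let $f:\mathbb{R}^n\to\mathbb{R}$ be convex and differentiable with Lipschitz continuous gradient. Let $g:\mathbb{R}^n\to\mathbb{R}\cup\{+\infty\}$ be a closed proper convex (possibly nonsmooth) function with bounded domain, and $F=f+g$. Fix a penalty parameter $\beta>0$. For $\lambda\in\mathbb{R}^m$, define $$\hat f_\beta(x;\lambda):=f(x)+\langle\lambda,Ax-b\rangle+\tfrac{\beta}{2}\|Ax-b\|^2,\qquad \mathcal{L}_\beta(x;\lambda):=\hat f_\beta(x;\lambda)+g(x),$$ and $d(\lambda):=\min_{x\in\mathbb{R}^n}\mathcal{L}_\beta(x;\lambda)$. Here $\nabla\hat f_\beta(x;\lambda)$ denotes the gradient of $\hat f_\beta$ with respect to $x$. It is assumed that strong duality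 holds between the problem and its augmented Lagrangian dual $\max_\lambda d(\lambda)$. IAL framework: choose $x^1\in\operatorname{dom} g$, $\lambda^1\in\mathbb{R}^m$, and a nonnegative sequence $\{\eta_k\}$. For $k=1,2,\dots$: find a point $x^{k+1}$ such that $$\max_{x\in\mathbb{R}^n}\Big\{\langle\nabla\hat f_\beta(x^{k+1};\lambda^k),\,x^{k+1}-x\rangle+g(x^{k+1})-g(x)\Big\}\le\eta_k,$$ and then set $\lambda^{k+1}=\lambda^k+\beta(Ax^{k+1}-b)$. *)

theory Defs
  imports "HOL-Analysis.Analysis" "HOL-Library.Landau_Symbols"
begin

text \<open>The nonsmooth part g : R^n -> R \<union> {+inf} is represented by its finite values
  on its effective domain D = dom g; outside D, g is +infinity.\<close>

definition fhat :: "(real^'n \<Rightarrow> real) \<Rightarrow> real^'n^'m \<Rightarrow> real^'m \<Rightarrow> real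
    \<Rightarrow> real^'m \<Rightarrow> real^'n \<Rightarrow> real" where
  "fhat f A b \<beta> lam x = f x + lam \<bullet> (A *v x - b) + (\<beta> / 2) * (norm (A *v x - b))^2"

definition grad_fhat :: "(real^'n \<Rightarrow> real^'n) \<Rightarrow> real^'n^'m \<Rightarrow> real^'m \<Rightarrow> real
    \<Rightarrow> real^'m \<Rightarrow> real^'n \<Rightarrow> real^'n" where
  "grad_fhat gf A b \<beta> lam x =
     gf x + transpose A *v lam + \<beta> *\<^sub>R (transpose A *v (A *v x - b))"

text \<open>Augmented Lagrangian dual function d(lam) = min_x L_beta(x; lam);
  L_beta = +inf outside D, so the minimum is taken over D.\<close>
definition dual_fun :: "(real^'n \<Rightarrow> real) \<Rightarrow> (real^'n \<Rightarrow> real) \<Rightarrow> (real^'n) set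
    \<Rightarrow> real^'n^'m \<Rightarrow> real^'m \<Rightarrow> real \<Rightarrow> real^'m \<Rightarrow> real" where
  "dual_fun f g D A b \<beta> lam = (INF x\<in>D. fhat f A b \<beta> lam x + g x)"

end

theory Submission
  imports Defs
begin

lemma norm_add_scale_sq:
  fixes u v :: "'a::real_inner"
  shows "(norm (u + c *\<^sub>R v))^2 = (norm u)^2 + 2*c*(u \<bullet> v) + c^2 * (norm v)^2"
  unfolding power2_norm_eq_inner by (simp add: algebra_simps inner_commute power2_eq_square)

lemma tr_inner: "(transpose (A::real^'n^'m) *v u) \<bullet> w = u \<bullet> (A *v w)"
  by (simp add: dot_lmul_matrix)

lemma sq_expand: "(norm ((s::'a::real_inner)))^2 = (norm r)^2 + 2 * (r \<bullet> (s - r)) + (norm (s - r))^2"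
  by (simp add: power2_norm_eq_inner algebra_simps inner_commute)

lemma fhat_lower:
  fixes f :: "real^'n \<Rightarrow> real"
  assumes cv: "convex_on UNIV f" and fg: "\<And>y. (f has_derivative (\<lambda>h. gf y \<bullet> h)) (at y)"
  shows "fhat f A b \<beta> mu z \<ge> fhat f A b \<beta> mu y + grad_fhat gf A b \<beta> mu y \<bullet> (z - y)
          + \<beta> / 2 * (norm (A *v z - A *v y))^2"
proof -
  define r where "r = A *v y - b"
  define s where "s = A *v z - b"
  have sr: "A *v z - A *v y = s - r" "A *v (z - y) = s - r"
    by (simp_all add: r_def s_def matrix_vector_mult_diff_distrib)
  have ff: "f y + gf y \<bullet> (z - y) \<le> f z"
  proof -
    define v where "v = z - y"
    define h where "h t = f (y + t *\<^sub>R v)" for t :: real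
    have hc: "convex_on UNIV h"
    proof (rule convex_onI)
      fix t x w :: real assume t: "t > 0" "t < 1"
      have e: "y + ((1 - t) * x + t * w) *\<^sub>R v = (1 - t) *\<^sub>R (y + x *\<^sub>R v) + t *\<^sub>R (y + w *\<^sub>R v)"
        by (simp add: algebra_simps)
      show "h ((1 - t) *\<^sub>R x + t *\<^sub>R w) \<le> (1 - t) * h x + t * h w"
        unfolding h_def using t by (simp add: e convex_onD[OF cv])
    qed simp
    have d1: "((\<lambda>t. y + t *\<^sub>R v) has_derivative (\<lambda>t. t *\<^sub>R v)) (at 0)"
      by (auto intro!: derivative_eq_intros)
    have d2: "(f has_derivative (\<lambda>h. gf y \<bullet> h)) (at (y + 0 *\<^sub>R v))" using fg by simp
    have "(h has_derivative (\<lambda>t. gf y \<bullet> (t *\<^sub>R v))) (at 0)"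
      unfolding h_def using has_derivative_compose[OF d1 d2] by (simp add: o_def)
    moreover have "(\<lambda>t. gf y \<bullet> (t *\<^sub>R v)) = (*) (gf y \<bullet> v)" by (auto simp: mult.commute)
    ultimately have "(h has_field_derivative (gf y \<bullet> v)) (at 0)"
      by (simp add: has_field_derivative_def)
    then have "h 1 - h 0 \<ge> (gf y \<bullet> v) * (1 - 0)"
      by (intro convex_on_imp_above_tangent[OF hc]) auto
    then show ?thesis by (simp add: h_def v_def)
  qed
  have g: "grad_fhat gf A b \<beta> mu y \<bullet> (z - y) = gf y \<bullet> (z - y) + mu \<bullet> (s - r) + \<beta> * (r \<bullet> (s - r))"
    unfolding grad_fhat_def r_def[symmetric] by (simp add: inner_add_left dot_lmul_matrix sr)
  have q: "(norm s)^2 = (norm r)^2 + 2 * (r \<bullet> (s - r)) + (norm (s - r))^2" by (rule sq_expand)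
  have m: "mu \<bullet> s = mu \<bullet> r + mu \<bullet> (s - r)" by (simp add: inner_diff_right)
  have q': "\<beta>/2*(norm s)^2 = \<beta>/2*(norm r)^2 + \<beta>*(r \<bullet> (s - r)) + \<beta>/2*(norm (s - r))^2"
    unfolding q by (simp add: ring_distribs)
  show ?thesis unfolding fhat_def g sr r_def[symmetric] s_def[symmetric]
    using ff q' m by linarith
qed

lemma key_ineq:
  fixes t c :: real assumes "t \<ge> 1" "c \<ge> 0"
  shows "c / t^2 + 2 * c / (t + 1) \<le> 2 * c / t"
proof -
  have t0: "t > 0" "t + 1 > 0" using assms by auto
  have t1: "t * t + t * (t * t) \<noteq> 0" "t * t + t * (t * t) > 0" proof -
    have "t * t > 0" "t * (t * t) > 0" using t0 by auto
    then show "t * t + t * (t * t) \<noteq> 0" "t * t + t * (t * t) > 0" by linarith+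
  qed
  have e1: "c / t^2 + 2 * c / (t + 1) = (c*(t+1) + 2*c*t^2)/(t^2*(t+1))"
    using t0 t1 by (simp add: field_simps power2_eq_square)
  have e2: "2 * c / t = (2*c*t*(t+1))/(t^2*(t+1))"
    using t0 t1 by (simp add: field_simps power2_eq_square)
  have "c*(t+1) + 2*c*t^2 \<le> 2*c*t*(t+1)"
  proof -
    have h: "c * 1 \<le> c * t" using assms by (intro mult_left_mono) auto
    have a1: "c*(t+1) + 2*c*t^2 = c + c*t + 2*(c*t*t)" by (simp add: power2_eq_square ring_distribs)
    have a2: "2*c*t*(t+1) = 2*(c*t*t) + 2*(c*t)" by (simp add: ring_distribs)
    show ?thesis unfolding a1 a2 using h by linarith
  qed
  then show ?thesis unfolding e1 e2 using t0 by (intro divide_right_mono) auto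
qed
theorem corollary1:
  fixes f :: "real^'n \<Rightarrow> real" and gf :: "real^'n \<Rightarrow> real^'n"
    and g :: "real^'n \<Rightarrow> real" and D :: "(real^'n) set"
    and A :: "real^'n^'m" and b :: "real^'m"
    and \<beta> \<sigma> :: real
    and xs :: "real^'n" and lams :: "real^'m"
    and x :: "nat \<Rightarrow> real^'n" and lam :: "nat \<Rightarrow> real^'m"
  assumes f_convex: "convex_on UNIV f"
    and f_grad: "\<And>y. (f has_derivative (\<lambda>h. gf y \<bullet> h)) (at y)"
    and f_lip: "\<exists>L. \<forall>y z. norm (gf y - gf z) \<le> L * norm (y - z)"
    and D_nonempty: "D \<noteq> {}"
    and D_convex: "convex D"
    and g_convex: "convex_on D g"
    and g_closed: "closed {(y, t). y \<in> D \<and> g y \<le> t}"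
    and D_bounded: "bounded D"
    and \<beta>_pos: "\<beta> > 0"
    and xs_feas: "xs \<in> D" "A *v xs = b"
    and xs_opt: "\<And>y. y \<in> D \<Longrightarrow> A *v y = b \<Longrightarrow> f xs + g xs \<le> f y + g y"
    and lams_opt: "\<And>l. dual_fun f g D A b \<beta> l \<le> dual_fun f g D A b \<beta> lams"
    and strong_duality: "dual_fun f g D A b \<beta> lams = f xs + g xs"
    and \<sigma>_pos: "\<sigma> > 0"
    and x1: "x 1 \<in> D"
    and inexact: "\<And>k. k \<ge> 1 \<Longrightarrow> x (k + 1) \<in> D \<and>
        (\<forall>z\<in>D. grad_fhat gf A b \<beta> (lam k) (x (k + 1)) \<bullet> (x (k + 1) - z)
                 + g (x (k + 1)) - g z \<le> \<sigma> / (real k)^2)"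
    and multiplier: "\<And>k. k \<ge> 1 \<Longrightarrow> lam (k + 1) = lam k + \<beta> *\<^sub>R (A *v x (k + 1) - b)"
  shows "(\<lambda>k. dual_fun f g D A b \<beta> lams - dual_fun f g D A b \<beta> (lam k)) \<in> O(\<lambda>k. 1 / real k)
    \<and> (\<lambda>k. (norm (A *v x (k + 1) - b))^2) \<in> O(\<lambda>k. 1 / real k)
    \<and> (\<lambda>k. \<bar>(f (x (k + 1)) + g (x (k + 1))) - (f xs + g xs)\<bar>) \<in> O(\<lambda>k. 1 / sqrt (real k))"

proof -
  define L where "L mu z = fhat f A b \<beta> mu z + g z" for mu z
  define d where "d mu = dual_fun f g D A b \<beta> mu" for mu
  define \<eta> where "\<eta> k = \<sigma> / (real k)^2" for k :: nat
  define r where "r k = A *v x (k + 1) - b" for k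
  define e where "e k = (norm (lam k - lams))^2" for k
  define dl where "dl k = d lams - d (lam k)" for k
  have dd: "d mu = (INF z\<in>D. L mu z)" for mu unfolding d_def dual_fun_def L_def ..
  obtain a where a: "\<And>z. z \<in> D \<Longrightarrow> norm z \<le> a" using D_bounded unfolding bounded_iff by blast
  have xD: "x (k+1) \<in> D" if "k \<ge> 1" for k using inexact[OF that] by blast
  have L1: "L mu z \<ge> L mu (x (k+1)) + (transpose A *v (mu - lam k)) \<bullet> (z - x (k+1))
      + \<beta>/2 * (norm (A *v z - A *v x (k+1)))^2 - \<eta> k"
    if k: "k \<ge> 1" and z: "z \<in> D" for k mu z
  proof -
    let ?x = "x (k+1)"
    note h1 = fhat_lower[OF f_convex f_grad, where A=A and b=b and \<beta>=\<beta> and mu=mu and z=z and y="x (k+1)"]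
    have h2: "grad_fhat gf A b \<beta> (lam k) ?x \<bullet> (?x - z) + g ?x - g z \<le> \<eta> k"
      using inexact[OF k] z unfolding \<eta>_def by auto
    have h3: "grad_fhat gf A b \<beta> mu ?x \<bullet> (z - ?x) = grad_fhat gf A b \<beta> (lam k) ?x \<bullet> (z - ?x)
        + (transpose A *v (mu - lam k)) \<bullet> (z - ?x)"
      unfolding grad_fhat_def by (simp add: algebra_simps inner_add_left inner_diff_left)
    have h4: "grad_fhat gf A b \<beta> (lam k) ?x \<bullet> (?x - z) = - (grad_fhat gf A b \<beta> (lam k) ?x \<bullet> (z - ?x))"
      by (simp add: inner_diff_right)
    show ?thesis using h1 h2 h3 h4 unfolding L_def by linarith
  qed
  have bdd: "bdd_below (L mu ` D)" for mu
  proof -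
    define w where "w = transpose A *v (mu - lam 1)"
    have x2: "x 2 \<in> D" using xD[of 1] by (simp add: numeral_2_eq_2)
    have "L mu (x 2) - norm w * (2*a) - \<sigma> \<le> L mu z" if z: "z \<in> D" for z
    proof -
      have l: "L mu z \<ge> L mu (x 2) + w \<bullet> (z - x 2) + \<beta>/2 * (norm (A *v z - A *v x 2))^2 - \<sigma>"
        using L1[of 1 z mu] z unfolding w_def \<eta>_def by (simp add: numeral_2_eq_2)
      have c1: "- (norm w * norm (z - x 2)) \<le> w \<bullet> (z - x 2)" using Cauchy_Schwarz_ineq2[of w "z - x 2"] by linarith
      have "norm (z - x 2) \<le> norm z + norm (x 2)" by (rule norm_triangle_ineq4)
      also have "\<dots> \<le> 2 * a" using a[OF z] a[OF x2] by linarith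
      finally have "norm w * norm (z - x 2) \<le> norm w * (2 * a)" by (intro mult_left_mono) auto
      moreover have "\<beta>/2 * (norm (A *v z - A *v x 2))^2 \<ge> 0" using \<beta>_pos by simp
      ultimately show ?thesis using l c1 by linarith
    qed
    then show ?thesis unfolding bdd_below_def by blast
  qed
  have K3: "d mu \<le> L mu z" if "z \<in> D" for mu z
    unfolding dd by (rule cINF_lower[OF bdd that])
  have K2: "L (lam k) (x (k+1)) \<le> d (lam k) + \<eta> k" if k: "k \<ge> 1" for k
  proof -
    have "L (lam k) (x (k+1)) - \<eta> k \<le> d (lam k)" unfolding dd
    proof (rule cINF_greatest[OF D_nonempty])
      fix z assume z: "z \<in> D"
      have "\<beta>/2 * (norm (A *v z - A *v x (k+1)))^2 \<ge> 0" using \<beta>_pos by simp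
      then show "L (lam k) (x (k+1)) - \<eta> k \<le> L (lam k) z" using L1[OF k z, of "lam k"] by simp
    qed
    then show ?thesis by simp
  qed
  have K1: "d (lam (k+1)) \<ge> L (lam k) (x (k+1)) - \<eta> k + \<beta>/2 * (norm (r k))^2" if k: "k \<ge> 1" for k
    unfolding dd
  proof (rule cINF_greatest[OF D_nonempty])
    fix z assume z: "z \<in> D"
    define s where "s = A *v z - b"
    have e1: "L (lam (k+1)) z = L (lam k) z + \<beta> * (r k \<bullet> s)"
      unfolding L_def fhat_def multiplier[OF k] r_def s_def by (simp add: inner_add_left)
    have e2: "A *v z - A *v x (k+1) = s - r k" unfolding s_def r_def by simp
    have e3: "(norm (s - r k))^2 + 2 * (r k \<bullet> s) = (norm s)^2 + (norm (r k))^2"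
      by (simp add: power2_norm_eq_inner algebra_simps inner_commute)
    have l: "L (lam k) z \<ge> L (lam k) (x (k+1)) + \<beta>/2 * (norm (s - r k))^2 - \<eta> k"
      using L1[OF k z, of "lam k"] e2 by simp
    have "\<beta>/2 * ((norm (s - r k))^2 + 2 * (r k \<bullet> s)) \<ge> \<beta>/2 * (norm (r k))^2"
      unfolding e3 using \<beta>_pos by (intro mult_left_mono) auto
    then show "L (lam k) (x (k+1)) - \<eta> k + \<beta>/2 * (norm (r k))^2 \<le> L (lam (k+1)) z"
      using l e1 by (simp add: algebra_simps)
  qed
  have dl0: "dl k \<ge> 0" for k unfolding dl_def d_def using lams_opt by simp
  have da: "dl (k+1) \<le> dl k - \<beta>/2 * (norm (r k))^2 + \<eta> k" if k: "k \<ge> 1" for k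
    using K1[OF k] K3[OF xD[OF k], of "lam k"] unfolding dl_def by linarith
  have db: "2*\<beta>*dl (k+1) + e (k+1) \<le> e k + 2*\<beta>*\<eta> k" if k: "k \<ge> 1" for k
  proof -
    define p where "p = (lam k - lams) \<bullet> r k"
    have E: "e (k+1) = e k + 2*\<beta>*p + \<beta>^2 * (norm (r k))^2"
    proof -
      have "lam (k+1) - lams = (lam k - lams) + \<beta> *\<^sub>R r k" using multiplier[OF k] unfolding r_def by simp
      then have "e (k+1) = (norm ((lam k - lams) + \<beta> *\<^sub>R r k))^2" unfolding e_def by metis
      then show ?thesis unfolding norm_add_scale_sq e_def p_def by simp
    qed
    have Lx: "L (lam k) (x (k+1)) = L lams (x (k+1)) + p"
      unfolding L_def fhat_def p_def r_def by (simp add: inner_diff_left)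
    have "dl (k+1) \<le> - p - \<beta>/2 * (norm (r k))^2 + \<eta> k"
      using K1[OF k] K3[OF xD[OF k], of lams] Lx unfolding dl_def by linarith
    then have "2*\<beta>*dl (k+1) \<le> 2*\<beta>*(- p - \<beta>/2 * (norm (r k))^2 + \<eta> k)"
      using \<beta>_pos by (intro mult_left_mono) auto
    then show ?thesis using E by (simp add: algebra_simps power2_eq_square)
  qed
  have etak: "\<eta> k + 2*\<sigma>/real (k+1) \<le> 2*\<sigma>/real k" if "k \<ge> 1" for k
    using key_ineq[of "real k" \<sigma>] that \<sigma>_pos unfolding \<eta>_def by (simp add: add.commute)
  define Q where "Q = e 1 + 4*\<beta>*\<sigma>"
  have SI: "2*\<beta>*(\<Sum>j\<in>{2..k}. dl j) + e k \<le> e 1 + 2*\<beta>*(2*\<sigma> - 2*\<sigma>/real k)" if "k \<ge> 1" for k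
    using that
  proof (induction k rule: dec_induct)
    case base then show ?case by simp
  next
    case (step k)
    have k: "k \<ge> 1" using step by simp
    have s: "(\<Sum>j\<in>{2..k+1}. dl j) = (\<Sum>j\<in>{2..k}. dl j) + dl (k+1)"
      using k by (simp add: sum.cl_ivl_Suc)
    have "2*\<beta>*\<eta> k + 2*\<beta>*(2*\<sigma> - 2*\<sigma>/real k) \<le> 2*\<beta>*(2*\<sigma> - 2*\<sigma>/real (k+1))"
    proof -
      have "2*\<beta>*(\<eta> k + 2*\<sigma>/real (k+1)) \<le> 2*\<beta>*(2*\<sigma>/real k)"
        using etak[OF k] \<beta>_pos by (intro mult_left_mono) auto
      then show ?thesis by (simp add: algebra_simps)
    qed
    then show ?case using step.IH db[OF k] s by (simp add: algebra_simps)
  qed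
  have Sb: "2*\<beta>*(\<Sum>j\<in>{2..k}. dl j) \<le> Q" and eb: "e k \<le> Q" if "k \<ge> 1" for k
  proof -
    have "2*\<beta>*(2*\<sigma> - 2*\<sigma>/real k) \<le> 4*\<beta>*\<sigma>" using \<beta>_pos \<sigma>_pos by simp
    moreover have "e k \<ge> 0" unfolding e_def by simp
    moreover have "(\<Sum>j\<in>{2..k}. dl j) \<ge> 0" using dl0 by (simp add: sum_nonneg)
    moreover have "2*\<beta>*(\<Sum>j\<in>{2..k}. dl j) \<ge> 0" using calculation(3) \<beta>_pos by simp
    ultimately show "2*\<beta>*(\<Sum>j\<in>{2..k}. dl j) \<le> Q" "e k \<le> Q" using SI[OF that] unfolding Q_def by linarith+
  qed
  have psi1: "dl (k+1) + 2*\<sigma>/real (k+1) \<le> dl k + 2*\<sigma>/real k" if k: "k \<ge> 1" for k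
  proof -
    have "\<beta>/2 * (norm (r k))^2 \<ge> 0" using \<beta>_pos by simp
    then show ?thesis using da[OF k] etak[OF k] by linarith
  qed
  have psi: "dl n + 2*\<sigma>/real n \<le> dl j + 2*\<sigma>/real j" if "1 \<le> j" "j \<le> n" for j n
    using that(2)
  proof (induction n rule: dec_induct)
    case base then show ?case by simp
  next
    case (step m) then show ?case using psi1[of m] that(1) by simp
  qed
  define C where "C = Q/(2*\<beta>) + 2*\<sigma>"
  have dlb: "real n * dl n \<le> 3*C" if n: "n \<ge> 2" for n
  proof -
    define K where "K = n div 2"
    have K1: "K \<ge> 1" "2*K \<le> n" "n \<le> 3*K" using n unfolding K_def by auto
    have W: "{K+1..2*K} \<subseteq> {2..n}" using K1 by auto
    have "real K * (dl n + 2*\<sigma>/real n) = (\<Sum>j\<in>{K+1..2*K}. dl n + 2*\<sigma>/real n)" by simp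
    also have "\<dots> \<le> (\<Sum>j\<in>{K+1..2*K}. dl j + 2*\<sigma>/real j)"
      by (rule sum_mono) (rule psi, use K1 in auto)
    also have "\<dots> = (\<Sum>j\<in>{K+1..2*K}. dl j) + (\<Sum>j\<in>{K+1..2*K}. 2*\<sigma>/real j)" by (simp add: sum.distrib)
    also have "(\<Sum>j\<in>{K+1..2*K}. dl j) \<le> (\<Sum>j\<in>{2..n}. dl j)"
      by (rule sum_mono2) (use W dl0 in auto)
    also have "(\<Sum>j\<in>{K+1..2*K}. 2*\<sigma>/real j) \<le> (\<Sum>j\<in>{K+1..2*K}. 2*\<sigma>/real (K+1))"
      by (rule sum_mono) (use \<sigma>_pos in \<open>auto intro!: divide_left_mono\<close>)
    also have "\<dots> = real K * (2*\<sigma>/real (K+1))" by simp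
    also have "\<dots> \<le> 2*\<sigma>" using \<sigma>_pos by (simp add: field_simps)
    finally have w: "real K * (dl n + 2*\<sigma>/real n) \<le> (\<Sum>j\<in>{2..n}. dl j) + 2*\<sigma>" by simp
    have "(\<Sum>j\<in>{2..n}. dl j) \<le> Q/(2*\<beta>)" using Sb[of n] n \<beta>_pos by (simp add: field_simps)
    moreover have "real K * dl n \<le> real K * (dl n + 2*\<sigma>/real n)" using \<sigma>_pos by (intro mult_left_mono) auto
    ultimately have "real K * dl n \<le> C" using w unfolding C_def by linarith
    moreover have "real n * dl n \<le> real (3*K) * dl n" using K1 dl0[of n] by (intro mult_right_mono) auto
    ultimately show ?thesis by simp
  qed
  define C2 where "C2 = 2*(3*C + \<sigma>)/\<beta>"
  have rb: "real n * (norm (r n))^2 \<le> C2" if n: "n \<ge> 2" for n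
  proof -
    have n1: "n \<ge> 1" using n by simp
    have "real n * \<eta> n \<le> \<sigma>" using n \<sigma>_pos unfolding \<eta>_def by (simp add: field_simps power2_eq_square)
    moreover have "real n * (\<beta>/2 * (norm (r n))^2) \<le> real n * (dl n + \<eta> n)"
      using da[OF n1] dl0[of "n+1"] by (intro mult_left_mono) auto
    ultimately have "real n * (\<beta>/2 * (norm (r n))^2) \<le> 3*C + \<sigma>" using dlb[OF n] by (simp add: algebra_simps)
    then show ?thesis unfolding C2_def using \<beta>_pos by (simp add: field_simps)
  qed
  define M where "M = norm lams + sqrt Q"
  have Q0: "Q \<ge> 0" unfolding Q_def e_def using \<beta>_pos \<sigma>_pos by simp
  have C0: "C \<ge> 0" unfolding C_def using Q0 \<beta>_pos \<sigma>_pos by simp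
  have C20: "C2 \<ge> 0" unfolding C2_def using C0 \<beta>_pos \<sigma>_pos by simp
  have M0: "M \<ge> 0" unfolding M_def using Q0 by (simp add: add_nonneg_nonneg)
  have Fb: "\<bar>(f (x (n+1)) + g (x (n+1))) - (f xs + g xs)\<bar> \<le> (\<sigma> + M * sqrt C2 + \<beta>/2*C2) / sqrt (real n)"
    if n: "n \<ge> 2" for n
  proof -
    have n1: "n \<ge> 1" using n by simp
    define R where "R = norm (r n)"
    have R0: "R \<ge> 0" unfolding R_def by simp
    have u1: "L (lam n) (x (n+1)) \<le> d lams + \<eta> n" using K2[OF n1] lams_opt[of "lam n"] unfolding d_def by simp
    have u2: "L (lam n) (x (n+1)) = f (x (n+1)) + g (x (n+1)) + lam n \<bullet> r n + \<beta>/2 * R^2"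
      unfolding L_def fhat_def r_def R_def by simp
    have u3: "d lams \<le> f (x (n+1)) + g (x (n+1)) + lams \<bullet> r n + \<beta>/2 * R^2"
      using K3[OF xD[OF n1], of lams] unfolding L_def fhat_def r_def R_def by simp
    have u4: "d lams = f xs + g xs" using strong_duality unfolding d_def by simp
    have c1: "\<bar>lam n \<bullet> r n\<bar> \<le> norm (lam n) * R" unfolding R_def by (rule Cauchy_Schwarz_ineq2)
    have c2: "\<bar>lams \<bullet> r n\<bar> \<le> norm lams * R" unfolding R_def by (rule Cauchy_Schwarz_ineq2)
    have nl: "norm (lam n) \<le> M"
    proof -
      have "norm (lam n) \<le> norm lams + norm (lam n - lams)" by (rule norm_triangle_sub)
      moreover have "norm (lam n - lams) = sqrt (e n)" unfolding e_def by simp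
      moreover have "sqrt (e n) \<le> sqrt Q" using eb[OF n1] by simp
      ultimately show ?thesis unfolding M_def by linarith
    qed
    have c1': "norm (lam n) * R \<le> M * R" using nl R0 by (rule mult_right_mono)
    have c2': "norm lams * R \<le> M * R" using R0 Q0 unfolding M_def by (intro mult_right_mono) auto
    have R20: "\<beta>/2 * R^2 \<ge> 0" using \<beta>_pos by simp
    have eta0: "\<eta> n \<ge> 0" unfolding \<eta>_def using \<sigma>_pos by simp
    have main: "\<bar>(f (x (n+1)) + g (x (n+1))) - (f xs + g xs)\<bar> \<le> \<eta> n + M * R + \<beta>/2 * R^2"
      using u1 u2 u3 u4 c1 c2 c1' c2' R20 eta0 by (simp add: abs_le_iff)
    define sn where "sn = sqrt (real n)"
    have sn0: "sn > 0" unfolding sn_def using n by simp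
    have snn: "sn \<le> real n"
    proof -
      have "real n \<le> real n * real n" using n1 by simp
      then have "sqrt (real n) \<le> sqrt (real n * real n)" by (rule real_sqrt_le_mono)
      then show ?thesis unfolding sn_def by simp
    qed
    have rbn: "R^2 \<le> C2 / real n" using rb[OF n] n unfolding R_def by (simp add: field_simps)
    have "R = sqrt (R^2)" using R0 by simp
    also have "\<dots> \<le> sqrt (C2 / real n)" using rbn by (rule real_sqrt_le_mono)
    also have "\<dots> = sqrt C2 / sn" unfolding sn_def by (simp add: real_sqrt_divide)
    finally have Rb: "R \<le> sqrt C2 / sn" .
    have "C2 / real n \<le> C2 / sn" using C20 sn0 snn by (intro divide_left_mono) auto
    with rbn have R2b: "R^2 \<le> C2 / sn" by linarith
    have "\<eta> n \<le> \<sigma> / sn"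
    proof -
      have "real n \<le> real n * real n" using n1 by simp
      then have "sn \<le> (real n)^2" using snn by (simp add: power2_eq_square)
      then show ?thesis unfolding \<eta>_def using \<sigma>_pos sn0 n1 by (intro divide_left_mono) auto
    qed
    moreover have "M * R \<le> M * (sqrt C2 / sn)" using Rb M0 by (rule mult_left_mono)
    moreover have "\<beta>/2 * R^2 \<le> \<beta>/2 * (C2 / sn)" using R2b \<beta>_pos by (intro mult_left_mono) auto
    ultimately have "\<eta> n + M * R + \<beta>/2 * R^2 \<le> \<sigma>/sn + M * (sqrt C2 / sn) + \<beta>/2 * (C2 / sn)" by linarith
    also have "\<dots> = (\<sigma> + M * sqrt C2 + \<beta>/2*C2) / sn" by (simp add: add_divide_distrib)
    finally show ?thesis using main unfolding sn_def by linarith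
  qed
  have G1: "(\<lambda>k. dual_fun f g D A b \<beta> lams - dual_fun f g D A b \<beta> (lam k)) \<in> O(\<lambda>k. 1 / real k)"
  proof (rule bigoI[where c="3*C"])
    show "\<forall>\<^sub>F k in at_top. norm (dual_fun f g D A b \<beta> lams - dual_fun f g D A b \<beta> (lam k)) \<le> 3*C * norm (1 / real k)"
      unfolding eventually_at_top_linorder
    proof (intro exI[of _ 2] allI impI)
      fix n :: nat assume n: "n \<ge> 2"
      have "dl n \<le> 3*C / real n" using dlb[OF n] n by (simp add: field_simps)
      then show "norm (dual_fun f g D A b \<beta> lams - dual_fun f g D A b \<beta> (lam n)) \<le> 3*C * norm (1 / real n)"
        using dl0[of n] unfolding dl_def d_def by simp
    qed
  qed
  have G2: "(\<lambda>k. (norm (A *v x (k + 1) - b))^2) \<in> O(\<lambda>k. 1 / real k)"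
  proof (rule bigoI[where c="C2"])
    show "\<forall>\<^sub>F k in at_top. norm ((norm (A *v x (k + 1) - b))^2) \<le> C2 * norm (1 / real k)"
      unfolding eventually_at_top_linorder
    proof (intro exI[of _ 2] allI impI)
      fix n :: nat assume n: "n \<ge> 2"
      have "(norm (r n))^2 \<le> C2 / real n" using rb[OF n] n by (simp add: field_simps)
      then show "norm ((norm (A *v x (n + 1) - b))^2) \<le> C2 * norm (1 / real n)"
        unfolding r_def by simp
    qed
  qed
  have G3: "(\<lambda>k. \<bar>(f (x (k + 1)) + g (x (k + 1))) - (f xs + g xs)\<bar>) \<in> O(\<lambda>k. 1 / sqrt (real k))"
  proof (rule bigoI[where c="\<sigma> + M * sqrt C2 + \<beta>/2*C2"])
    show "\<forall>\<^sub>F k in at_top. norm (\<bar>(f (x (k + 1)) + g (x (k + 1))) - (f xs + g xs)\<bar>)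
        \<le> (\<sigma> + M * sqrt C2 + \<beta>/2*C2) * norm (1 / sqrt (real k))"
      unfolding eventually_at_top_linorder
    proof (intro exI[of _ 2] allI impI)
      fix n :: nat assume n: "n \<ge> 2"
      show "norm (\<bar>(f (x (n + 1)) + g (x (n + 1))) - (f xs + g xs)\<bar>)
        \<le> (\<sigma> + M * sqrt C2 + \<beta>/2*C2) * norm (1 / sqrt (real n))"
        using Fb[OF n] by simp
    qed
  qed
  show ?thesis using G1 G2 G3 by blast
qed

end
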